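(* Let $k$ be an odd positive integer and suppose $$k^2=a^2+b^2+c^2=a'^2+b'^2+c'^2$$ are two different representations with integers $a,b,c,a',b',c'$, $\gcd(a,b,c,a',b',c')=1$, $c'>c$, and $a,a'$ both odd. Set $$\Delta_{12}=\tfrac{a'-a}{2},\ \Delta_{34}=\tfrac{a+a'}{2},\ \Delta_{13}=-\tfrac{b'-b}{2},\ \Delta_{24}=\tfrac{b+b'}{2},\ \Delta_{14}=\tfrac{c+c'}{2},\ \Delta_{23}=\tfrac{c'-c}{2}.$$ Then these are integers satisfying $$\Delta_{12}\Delta_{34}-\Delta_{13}\Delta_{24}+\Delta_{14}\Delta_{23}=0$$ and $$k^2=(\Delta_{12}\pm \Delta_{34})^2+(\Delta_{13}\mp\Delta_{24})^2+(\Delta_{14}\pm\Delta_{23})^2$$ (for both choices of signs). Moreover, the set $\mathcal S$ of all $[u,v,w,t]\in\mathbb{Z}^4$ with $$\Delta_{34}v+\Delta_{24}w+\Delta_{23}t=0,\qquad \Delta_{23}u+\Delta_{13}v+\Delta_{12}w=0$$ is a two-dimensional lattice that contains a family of lattice squares, i.e. there exist nonzero vectors $X,Y\in\mathcal S$ with $X\cdot Y=0$ and $X\cdot X=Y\cdot Y$.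
   Context: $\cdot$ denotes the standard dot product on $\mathbb{R}^4$. *)

theory Defs
  imports "HOL-Analysis.Analysis"
begin

definition lattice2 :: "(real^4) set \<Rightarrow> bool" where
  "lattice2 L \<longleftrightarrow> (\<exists>u v. u \<noteq> v \<and> independent {u, v} \<and>
      L = {of_int m *\<^sub>R u + of_int n *\<^sub>R v | m n. True})"

definition lattice_S :: "real \<Rightarrow> real \<Rightarrow> real \<Rightarrow> real \<Rightarrow> real \<Rightarrow> (real^4) set" where
  "lattice_S D12 D13 D23 D24 D34 = {x. (\<forall>i. x $ i \<in> \<int>) \<and>
      D34 * x $ 2 + D24 * x $ 3 + D23 * x $ 4 = 0 \<and>
      D23 * x $ 1 + D13 * x $ 2 + D12 * x $ 3 = 0}"

end

theory Submission imports Defs begin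
definition iv :: "int \<Rightarrow> int \<Rightarrow> int \<Rightarrow> int \<Rightarrow> real^4" where
  "iv a b c d = (\<chi> i. real_of_int (if i = 1 then a else if i = 2 then b else if i = 3 then c else d))"
lemma iv_comp[simp]: "iv a b c d $ 1 = a" "iv a b c d $ 2 = b" "iv a b c d $ 3 = c" "iv a b c d $ 4 = d"
  by (simp_all add: iv_def)
lemma iv_inner: "iv a b c d \<bullet> iv a' b' c' d' = real_of_int (a*a' + b*b' + c*c' + d*d')"
  by (simp add: inner_vec_def sum_4)
lemma iv_zero: "iv a b c d = 0 \<longleftrightarrow> a = 0 \<and> b = 0 \<and> c = 0 \<and> d = 0"
  by (simp add: vec_eq_iff forall_4)
lemma iv_lin: "of_int m *\<^sub>R iv a b c d + of_int n *\<^sub>R iv a' b' c' d' = iv (m*a+n*a') (m*b+n*b') (m*c+n*c') (m*d+n*d')"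
  by (simp add: vec_eq_iff forall_4)
lemma iv_ex: assumes "\<forall>i. x $ i \<in> \<int>" shows "\<exists>a b c d. x = iv a b c d"
proof -
  from assms obtain a b c d where "x$1 = of_int a" "x$2 = of_int b" "x$3 = of_int c" "x$4 = of_int d"
    by (metis Ints_cases)
  thus ?thesis by (auto simp: vec_eq_iff forall_4)
qed

lemma memS: "iv z1 z2 z3 z4 \<in> lattice_S (of_int d12) (of_int d13) (of_int d23) (of_int d24) (of_int d34)
   \<longleftrightarrow> d34*z2 + d24*z3 + d23*z4 = 0 \<and> d23*z1 + d13*z2 + d12*z3 = 0"
proof -
  have i: "\<forall>i. iv z1 z2 z3 z4 $ i \<in> \<int>" by (simp add: forall_4)
  have e1: "(real_of_int d34 * real_of_int z2 + real_of_int d24 * real_of_int z3 + real_of_int d23 * real_of_int z4 = 0)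
     = (d34*z2 + d24*z3 + d23*z4 = 0)" using of_int_eq_0_iff[of "d34*z2 + d24*z3 + d23*z4", where 'a=real] by simp
  have e2: "(real_of_int d23 * real_of_int z1 + real_of_int d13 * real_of_int z2 + real_of_int d12 * real_of_int z3 = 0)
     = (d23*z1 + d13*z2 + d12*z3 = 0)" using of_int_eq_0_iff[of "d23*z1 + d13*z2 + d12*z3", where 'a=real] by simp
  show ?thesis unfolding lattice_S_def using i e1 e2 by simp
qed

lemma aux4: fixes K A B C :: int
  assumes "K mod 4 = 1" "A mod 4 = 1" "B mod 4 = 1" "C mod 4 = 0 \<or> C mod 4 = 1" "K = A+B+C" shows False
  using assms by presburger

lemma even_sq: fixes k a b c :: int
  assumes "odd k" "odd a" "k^2 = a^2+b^2+c^2" shows "even b"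
proof -
  have sq: "x^2 mod 4 = (if even x then 0 else 1)" for x :: int
  proof (cases "even x")
    case True then obtain y where "x = 2*y" by blast
    then show ?thesis by (simp add: power2_eq_square)
  next
    case False then obtain y where "x = 2*y+1" using oddE by blast
    define z where "z = y*y+y"
    have "x^2 = 4*z + 1" using \<open>x = 2*y+1\<close> by (simp add: z_def power2_eq_square algebra_simps)
    then show ?thesis using False by presburger
  qed
  show ?thesis
  proof (rule ccontr)
    assume nb: "odd b"
    have k4: "k^2 mod 4 = 1" using sq[of k] assms(1) by presburger
    have a4: "a^2 mod 4 = 1" using sq[of a] assms(2) by presburger
    have b4: "b^2 mod 4 = 1" using sq[of b] nb by presburger
    have c4: "c^2 mod 4 = 0 \<or> c^2 mod 4 = 1" using sq[of c] by presburger
    show False using aux4[OF k4 a4 b4 c4 assms(3)] .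
  qed
qed

lemma hnf:
  fixes A :: "(int\<times>int) set" and N :: int
  assumes cl: "\<And>v w v2 w2 m n. (v,w) \<in> A \<Longrightarrow> (v2,w2) \<in> A \<Longrightarrow> (m * v + n * v2, m * w + n * w2) \<in> A"
    and N: "N > 0" "(N,0) \<in> A" "(0,N) \<in> A"
  shows "\<exists>g w0 h. g > 0 \<and> h > 0 \<and> (g,w0) \<in> A \<and> (0,h) \<in> A \<and>
     (\<forall>v w. (v,w) \<in> A \<longleftrightarrow> (\<exists>m n. v = m*g \<and> w = m*w0 + n*h))"
proof -
  define P where "P = (\<lambda>n::nat. n > 0 \<and> (\<exists>w. (int n, w) \<in> A))"
  have PN: "P (nat N)" using N by (auto simp: P_def)
  define g where "g = (LEAST n. P n)"
  have Pg: "P g" unfolding g_def by (rule LeastI[of P, OF PN])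
  have gmin: "\<And>n. n < g \<Longrightarrow> \<not> P n" unfolding g_def by (rule not_less_Least)
  obtain w0 where w0: "(int g, w0) \<in> A" "g > 0" using Pg by (auto simp: P_def)
  define Q where "Q = (\<lambda>n::nat. n > 0 \<and> (0, int n) \<in> A)"
  have QN: "Q (nat N)" using N by (auto simp: Q_def)
  define h where "h = (LEAST n. Q n)"
  have Qh: "Q h" unfolding h_def by (rule LeastI[of Q, OF QN])
  have hmin: "\<And>n. n < h \<Longrightarrow> \<not> Q n" unfolding h_def by (rule not_less_Least)
  have h: "(0, int h) \<in> A" "h > 0" using Qh by (auto simp: Q_def)
  have "(v,w) \<in> A \<longleftrightarrow> (\<exists>m n. v = m*int g \<and> w = m*w0 + n*int h)" for v w
  proof
    assume vw: "(v,w) \<in> A"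
    define q r where "q = v div int g" and "r = v mod int g"
    have "(1 * v + (-q)*int g, 1*w + (-q)*w0) \<in> A" using cl[OF vw w0(1)] .
    moreover have "1 * v + (-q)*int g = r" unfolding q_def r_def by (simp add: algebra_simps minus_div_mult_eq_mod)
    ultimately have rA: "(r, w - q*w0) \<in> A" by simp
    have r0: "r \<ge> 0" "r < int g" using w0(2) unfolding r_def by auto
    have "r = 0"
    proof (rule ccontr)
      assume "r \<noteq> 0"
      then have "P (nat r)" using rA r0 by (auto simp: P_def)
      moreover have "nat r < g" using r0 by auto
      ultimately show False using gmin by blast
    qed
    then have v: "v = q * int g" unfolding q_def r_def using div_mult_mod_eq[of v "int g"] by simp
    have w'A: "(0, w - q*w0) \<in> A" using rA \<open>r = 0\<close> by simp
    define q2 r2 where "q2 = (w - q*w0) div int h" and "r2 = (w - q*w0) mod int h"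
    have "(1*0 + (-q2)*0, 1*(w - q*w0) + (-q2)*int h) \<in> A" using cl[OF w'A h(1)] .
    moreover have "1*(w - q*w0) + (-q2)*int h = r2" unfolding q2_def r2_def by (simp add: algebra_simps minus_div_mult_eq_mod)
    ultimately have r2A: "(0, r2) \<in> A" by simp
    have r20: "r2 \<ge> 0" "r2 < int h" using h(2) unfolding r2_def by auto
    have "r2 = 0"
    proof (rule ccontr)
      assume "r2 \<noteq> 0"
      then have "Q (nat r2)" using r2A r20 by (auto simp: Q_def)
      moreover have "nat r2 < h" using r20 by auto
      ultimately show False using hmin by blast
    qed
    then have "w - q*w0 = q2 * int h" unfolding q2_def r2_def using div_mult_mod_eq[of "w - q*w0" "int h"] by simp
    then show "\<exists>m n. v = m*int g \<and> w = m*w0 + n*int h" using v by (intro exI[of _ q] exI[of _ q2]) simp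
  next
    assume "\<exists>m n. v = m*int g \<and> w = m*w0 + n*int h"
    then obtain m n where "v = m*int g" "w = m*w0 + n*int h" by blast
    then show "(v,w) \<in> A" using cl[OF w0(1) h(1), of m n] by simp
  qed
  then show ?thesis using w0 h by (intro exI[of _ "int g"] exI[of _ w0] exI[of _ "int h"]) auto
qed
theorem theorem2p8:
  fixes k a b c a' b' c' :: int
  assumes k_pos: "k > 0" and k_odd: "odd k"
    and rep1: "k^2 = a^2 + b^2 + c^2"
    and rep2: "k^2 = a'^2 + b'^2 + c'^2"
    and diff: "(a, b, c) \<noteq> (a', b', c')"
    and gcd1: "Gcd {a, b, c, a', b', c'} = 1"
    and cc: "c' > c"
    and aodd: "odd a" and a'odd: "odd a'"
  defines "D12 \<equiv> (real_of_int a' - real_of_int a) / 2"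
    and "D34 \<equiv> (real_of_int a + real_of_int a') / 2"
    and "D13 \<equiv> - (real_of_int b' - real_of_int b) / 2"
    and "D24 \<equiv> (real_of_int b + real_of_int b') / 2"
    and "D14 \<equiv> (real_of_int c + real_of_int c') / 2"
    and "D23 \<equiv> (real_of_int c' - real_of_int c) / 2"
  shows "D12 \<in> \<int> \<and> D34 \<in> \<int> \<and> D13 \<in> \<int> \<and> D24 \<in> \<int> \<and> D14 \<in> \<int> \<and> D23 \<in> \<int>
    \<and> D12 * D34 - D13 * D24 + D14 * D23 = 0
    \<and> (real_of_int k)^2 = (D12 + D34)^2 + (D13 - D24)^2 + (D14 + D23)^2
    \<and> (real_of_int k)^2 = (D12 - D34)^2 + (D13 + D24)^2 + (D14 - D23)^2
    \<and> lattice2 (lattice_S D12 D13 D23 D24 D34)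
    \<and> (\<exists>X\<in>lattice_S D12 D13 D23 D24 D34. \<exists>Y\<in>lattice_S D12 D13 D23 D24 D34. X \<noteq> 0 \<and> Y \<noteq> 0 \<and> X \<bullet> Y = 0 \<and> X \<bullet> X = Y \<bullet> Y)"
proof -
  have eb: "even b" using even_sq[OF k_odd aodd rep1] .
  have ec: "even c" using even_sq[OF k_odd aodd, of c b] rep1 by (simp add: add.commute add.left_commute)
  have eb': "even b'" using even_sq[OF k_odd a'odd rep2] .
  have ec': "even c'" using even_sq[OF k_odd a'odd, of c' b'] rep2 by (simp add: add.commute add.left_commute)
  have "even (a' - a)" "even (a + a')" "even (b - b')" "even (b + b')" "even (c + c')" "even (c' - c)"
    using aodd a'odd eb eb' ec ec' by auto
  then obtain d12 d34 d13 d24 d14 d23 where h: "a' - a = 2*d12" "a + a' = 2*d34" "b - b' = 2*d13"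
     "b + b' = 2*d24" "c + c' = 2*d14" "c' - c = 2*d23"
    by (metis evenE)
  have D: "D12 = of_int d12" "D34 = of_int d34" "D13 = of_int d13" "D24 = of_int d24" "D14 = of_int d14" "D23 = of_int d23"
  proof -
    have r: "real_of_int (a' - a) = of_int (2*d12)" "real_of_int (a + a') = of_int (2*d34)"
      "real_of_int (b - b') = of_int (2*d13)" "real_of_int (b + b') = of_int (2*d24)"
      "real_of_int (c + c') = of_int (2*d14)" "real_of_int (c' - c) = of_int (2*d23)"
      using h by simp_all
    show "D12 = of_int d12" "D34 = of_int d34" "D13 = of_int d13" "D24 = of_int d24" "D14 = of_int d14" "D23 = of_int d23"
      using r unfolding D12_def D34_def D13_def D24_def D14_def D23_def by simp_all
  qed
  have sub: "a = d34 - d12" "a' = d12 + d34" "b = d24 + d13" "b' = d24 - d13" "c = d14 - d23" "c' = d14 + d23"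
    using h by linarith+
  have r1: "k^2 = (d34 - d12)^2 + (d24 + d13)^2 + (d14 - d23)^2" using rep1 sub by simp
  have r2: "k^2 = (d12 + d34)^2 + (d24 - d13)^2 + (d14 + d23)^2" using rep2 sub by simp
  have i1: "(d12 + d34)^2 + (d24 - d13)^2 + (d14 + d23)^2 - ((d34 - d12)^2 + (d24 + d13)^2 + (d14 - d23)^2) = 4*(d12*d34 - d13*d24 + d14*d23)"
    by algebra
  have i2: "(d12 + d34)^2 + (d24 - d13)^2 + (d14 + d23)^2 + ((d34 - d12)^2 + (d24 + d13)^2 + (d14 - d23)^2) = 2*(d12^2 + d13^2 + d14^2 + d23^2 + d24^2 + d34^2)"
    by algebra
  have "k^2 - k^2 = 4*(d12*d34 - d13*d24 + d14*d23)" using i1 by (simp only: flip: r1 r2)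
  then have P: "d12*d34 - d13*d24 + d14*d23 = 0" by simp
  have "k^2 + k^2 = 2*(d12^2 + d13^2 + d14^2 + d23^2 + d24^2 + d34^2)" using i2 by (simp only: flip: r1 r2)
  then have Nk: "k^2 = d12^2 + d13^2 + d14^2 + d23^2 + d24^2 + d34^2" by simp
  have d23pos: "d23 > 0" using cc sub by linarith
  have Pr: "real_of_int d12 * of_int d34 - of_int d13 * of_int d24 + of_int d14 * of_int d23 = 0"
    using arg_cong[OF P, of real_of_int] by simp
  have k1: "(real_of_int k)^2 = (of_int d12 + of_int d34)^2 + (of_int d13 - of_int d24)^2 + (of_int d14 + of_int d23)^2"
  proof -
    have "k^2 = (d12 + d34)^2 + (d13 - d24)^2 + (d14 + d23)^2" using r2 by (simp add: power2_commute)
    from arg_cong[OF this, of real_of_int] show ?thesis by simp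
  qed
  have k2: "(real_of_int k)^2 = (of_int d12 - of_int d34)^2 + (of_int d13 + of_int d24)^2 + (of_int d14 - of_int d23)^2"
  proof -
    have "k^2 = (d12 - d34)^2 + (d13 + d24)^2 + (d14 - d23)^2" using r1 by (simp add: power2_commute add.commute)
    from arg_cong[OF this, of real_of_int] show ?thesis by simp
  qed
  define X where "X = iv (-k*d13) (k*d23) 0 (-k*d34)"
  define Y where "Y = iv (d12*d23 - d14*d34) (d12*d13 + d24*d34) (-(d13^2+d23^2+d34^2)) (d14*d13 + d24*d23)"
  let ?S = "lattice_S (of_int d12) (of_int d13) (of_int d23) (of_int d24) (of_int d34)"
  have XS: "X \<in> ?S" unfolding X_def memS by (simp add: algebra_simps)
  have y1: "d34 * (d12*d13 + d24*d34) + d24 * (-(d13^2+d23^2+d34^2)) + d23 * (d14*d13 + d24*d23) = d13 * (d12*d34 - d13*d24 + d14*d23)"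
    by algebra
  have y2: "d23 * (d12*d23 - d14*d34) + d13 * (d12*d13 + d24*d34) + d12 * (-(d13^2+d23^2+d34^2)) = - d34 * (d12*d34 - d13*d24 + d14*d23)"
    by algebra
  have YS: "Y \<in> ?S" unfolding Y_def memS using y1 y2 P by simp
  have X0: "X \<noteq> 0" unfolding X_def iv_zero using k_pos d23pos by simp
  have "d23^2 > 0" using d23pos by simp
  then have "d13^2+d23^2+d34^2 > 0" using zero_le_power2[of d13] zero_le_power2[of d34] by linarith
  then have "-(d13^2+d23^2+d34^2) \<noteq> 0" by linarith
  then have Y0: "Y \<noteq> 0" unfolding Y_def iv_zero by blast
  have XY: "X \<bullet> Y = 0" unfolding X_def Y_def iv_inner of_int_eq_0_iff by (simp add: algebra_simps)
  have yy: "(d12*d23 - d14*d34)*(d12*d23 - d14*d34) + (d12*d13 + d24*d34)*(d12*d13 + d24*d34) + (-(d13^2+d23^2+d34^2))*(-(d13^2+d23^2+d34^2)) + (d14*d13 + d24*d23)*(d14*d13 + d24*d23)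
     = (d13^2+d23^2+d34^2) * (d12^2 + d13^2 + d14^2 + d23^2 + d24^2 + d34^2) - (d12*d34 - d13*d24 + d14*d23)^2"
    by algebra
  have xx: "(-k*d13)*(-k*d13) + (k*d23)*(k*d23) + 0*0 + (-k*d34)*(-k*d34) = (d13^2+d23^2+d34^2) * k^2"
    by algebra
  have XX: "X \<bullet> X = Y \<bullet> Y" unfolding X_def Y_def iv_inner of_int_eq_iff using P Nk yy xx by simp
  define A where "A = {(v,w). d23 dvd (d13* v + d12*w) \<and> d23 dvd (d34* v + d24*w)}"
  have clA: "(m * v + n * v2, m * w + n * w2) \<in> A" if "(v,w) \<in> A" "(v2,w2) \<in> A" for v w v2 w2 m n
  proof -
    have "d13*(m * v + n * v2) + d12*(m * w + n * w2) = m*(d13* v + d12*w) + n*(d13* v2+d12*w2)"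
      "d34*(m * v + n * v2) + d24*(m * w + n * w2) = m*(d34* v + d24*w) + n*(d34* v2+d24*w2)"
      by (simp_all add: algebra_simps)
    then show ?thesis using that unfolding A_def by auto
  qed
  have NA: "(d23, 0) \<in> A" "(0, d23) \<in> A" unfolding A_def by auto
  obtain g w0 hh where gh: "g > 0" "hh > 0" "(g,w0) \<in> A" "(0,hh) \<in> A"
    and Aeq: "\<And>v w. (v,w) \<in> A \<longleftrightarrow> (\<exists>m n. v = m*g \<and> w = m*w0 + n*hh)"
    using hnf[of A d23, OF clA d23pos NA] by blast
  obtain e1 e2 where e: "d13*g + d12*w0 = d23*e1" "d34*g + d24*w0 = d23*e2" using gh(3) unfolding A_def by (auto simp: dvd_def)
  obtain f1 f2 where f: "d12*hh = d23*f1" "d24*hh = d23*f2" using gh(4) unfolding A_def by (auto simp: dvd_def)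
  define U where "U = iv (-e1) g w0 (-e2)"
  define V where "V = iv (-f1) 0 hh (-f2)"
  have UV: "U \<noteq> V" unfolding U_def V_def using gh(1) by (metis iv_comp(2) of_int_eq_iff less_irrefl)
  have ind: "independent {U, V}"
  proof (rule independent_insertI)
    show "independent {V}" using gh(2) unfolding V_def
      by (metis independent_empty independent_insertI iv_zero less_irrefl span_empty singletonD)
    show "U \<notin> span {V}"
    proof
      assume "U \<in> span {V}"
      then obtain t where "U = t *\<^sub>R V" by (auto simp: span_singleton)
      then have "U $ 2 = t * V $ 2" by simp
      then show False unfolding U_def V_def using gh(1) by simp
    qed
  qed
  have Seq: "?S = {of_int m *\<^sub>R U + of_int n *\<^sub>R V | m n. True}"
  proof (intro set_eqI iffI)
    fix x assume xS: "x \<in> ?S"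
    then obtain z1 z2 z3 z4 where xz: "x = iv z1 z2 z3 z4" using iv_ex unfolding lattice_S_def by blast
    have eqs: "d34*z2 + d24*z3 + d23*z4 = 0" "d23*z1 + d13*z2 + d12*z3 = 0" using xS unfolding xz memS by auto
    have "d13*z2 + d12*z3 = d23*(-z1)" "d34*z2 + d24*z3 = d23*(-z4)" using eqs by linarith+
    then have "(z2, z3) \<in> A" unfolding A_def by (metis (no_types, lifting) case_prodI dvd_triv_left mem_Collect_eq)
    then obtain m n where mn: "z2 = m*g" "z3 = m*w0 + n*hh" using Aeq by blast
    have "d23*z1 = -(d13*z2 + d12*z3)" using eqs by linarith
    also have "\<dots> = -(m*(d13*g + d12*w0) + n*(d12*hh))" by (simp add: mn algebra_simps)
    also have "\<dots> = d23*(m*(-e1) + n*(-f1))" by (simp only: e f) (simp add: algebra_simps)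
    finally have "d23*z1 = d23*(m*(-e1) + n*(-f1))" .
    then have 1: "z1 = m*(-e1) + n*(-f1)" using d23pos by simp
    have "d23*z4 = -(d34*z2 + d24*z3)" using eqs by linarith
    also have "\<dots> = -(m*(d34*g + d24*w0) + n*(d24*hh))" by (simp add: mn algebra_simps)
    also have "\<dots> = d23*(m*(-e2) + n*(-f2))" by (simp only: e f) (simp add: algebra_simps)
    finally have "d23*z4 = d23*(m*(-e2) + n*(-f2))" .
    then have 4: "z4 = m*(-e2) + n*(-f2)" using d23pos by simp
    have "x = of_int m *\<^sub>R U + of_int n *\<^sub>R V" unfolding xz U_def V_def iv_lin using 1 4 mn by simp
    then show "x \<in> {of_int m *\<^sub>R U + of_int n *\<^sub>R V | m n. True}" by blast
  next
    fix x assume "x \<in> {of_int m *\<^sub>R U + of_int n *\<^sub>R V | m n. True}"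
    then obtain m n where x: "x = of_int m *\<^sub>R U + of_int n *\<^sub>R V" by blast
    have q1: "d34 * (m * g + n * 0) + d24 * (m * w0 + n * hh) + d23 * (m * - e2 + n * - f2) = m*((d34*g + d24*w0) - d23*e2) + n*(d24*hh - d23*f2)"
      by (simp add: algebra_simps)
    have q2: "d23 * (m * - e1 + n * - f1) + d13 * (m * g + n * 0) + d12 * (m * w0 + n * hh) = m*((d13*g + d12*w0) - d23*e1) + n*(d12*hh - d23*f1)"
      by (simp add: algebra_simps)
    show "x \<in> ?S" unfolding x U_def V_def iv_lin memS using e f q1 q2 by simp
  qed
  have L: "lattice2 ?S" unfolding lattice2_def using UV ind Seq by blast
  have ex: "\<exists>X\<in>?S. \<exists>Y\<in>?S. X \<noteq> 0 \<and> Y \<noteq> 0 \<and> X \<bullet> Y = 0 \<and> X \<bullet> X = Y \<bullet> Y"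
    using XS YS X0 Y0 XY XX by blast
  show ?thesis unfolding D by (intro conjI Ints_of_int Pr k1 k2 L ex)
qed
end
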